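(* Let $M_G$ be an $n$-vertex mixed graph with underlying graph $G$, and let $\Delta(G)$ be the maximum degree of $G$. Then $\rho(M_G)\le \Delta(G)$. Moreover, when $G$ is connected, equality $\rho(M_G)=\Delta(G)$ holds if and only if $G$ is $\Delta(G)$-regular and $V(M_G)$ can be partitioned into six (possibly empty) parts $V_1,V_{-1},V_{\omega},V_{\bar\omega},V_{-\omega},V_{-\bar\omega}$ (indexed by $\mathbb{T}_6=\{1,-1,\omega,\bar\omega,-\omega,-\bar\omega\}$) such that one of the following holds: (i) for every $j\in\mathbb{T}_6$ the induced mixed subgraph $M_G[V_j]$ contains only undirected edges, and every edge of $M_G$ not lying inside some $M_G[V_j]$ is an arc $\overrightarrow{uv}$ with $u\in V_j$ and $v\in V_{\bar\omega\cdot j}$ for some $j\in\mathbb{T}_6$; (ii) for every $j\in\mathbb{T}_6$ the set $V_j$ is independent in $G$; every undirected edge $\{u,v\}$ of $M_G$ satisfies $u\in V_j$, $v\in V_{-j}$ for some $j\in\mathbb{T}_6$; and every arc $\overrightarrow{uv}$ of $M_G$ satisfies $u\in V_j$, $v\in V_{-\bar\omega\cdot j}$ for some $j\in\mathbb{T}_6$.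
   Context: A mixed graph $M_G$ is obtained from a finite simple graph $G$ (its underlying graph) by orienting the edges of some subset of $E(G)$; oriented edges are arcs $\overrightarrow{uv}$, the others are undirected edges $\{u,v\}$. Let $\omega=\frac{1+\mathbf{i}\sqrt3}{2}$. The Hermitian adjacency matrix of the second kind $N(M_G)$ is indexed by the vertices, with $(u,v)$-entry $\omega$ if $\overrightarrow{uv}$ is an arc, $\bar\omega$ if $\overrightarrow{vu}$ is an arc, $1$ if $\{u,v\}$ is an undirected edge, and $0$ otherwise. Its eigenvalues are the eigenvalues of $M_G$; with $\lambda_1\ge\dots\ge\lambda_n$ these eigenvalues, the spectral radius is $\rho(M_G)=\max\{|\lambda_1|,|\lambda_n|\}$. $\mathbb{T}_6$ denotes the group of sixth roots of unity. *)

theory Defs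
  imports "HOL-Analysis.Analysis"
begin

text \<open>A mixed graph on the finite vertex type 'n (vertex set = UNIV):
  E is the edge relation of the underlying simple graph G,
  A u v means that the edge {u,v} is oriented as the arc from u to v.\<close>

definition mixed_graph :: "('n \<Rightarrow> 'n \<Rightarrow> bool) \<Rightarrow> ('n \<Rightarrow> 'n \<Rightarrow> bool) \<Rightarrow> bool" where
  "mixed_graph E A \<longleftrightarrow>
     (\<forall>u v. E u v \<longrightarrow> E v u) \<and> (\<forall>u. \<not> E u u) \<and>
     (\<forall>u v. A u v \<longrightarrow> E u v) \<and> (\<forall>u v. A u v \<longrightarrow> \<not> A v u)"

definition undirected_edge :: "('n \<Rightarrow> 'n \<Rightarrow> bool) \<Rightarrow> ('n \<Rightarrow> 'n \<Rightarrow> bool) \<Rightarrow> 'n \<Rightarrow> 'n \<Rightarrow> bool" where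
  "undirected_edge E A u v \<longleftrightarrow> E u v \<and> \<not> A u v \<and> \<not> A v u"

definition omega :: complex where
  "omega = (1 + \<i> * of_real (sqrt 3)) / 2"

definition T6 :: "complex set" where
  "T6 = {1, -1, omega, cnj omega, - omega, - cnj omega}"

definition hermN :: "('n::finite \<Rightarrow> 'n \<Rightarrow> bool) \<Rightarrow> ('n \<Rightarrow> 'n \<Rightarrow> bool) \<Rightarrow> complex^'n^'n" where
  "hermN E A = (\<chi> u v. if A u v then omega else if A v u then cnj omega
                       else if E u v then 1 else 0)"

definition is_eigenvalue :: "complex^'n^'n \<Rightarrow> complex \<Rightarrow> bool" where
  "is_eigenvalue M l \<longleftrightarrow> (\<exists>x. x \<noteq> 0 \<and> M *v x = l *s x)"

definition spectral_radius :: "complex^'n^'n \<Rightarrow> real" where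
  "spectral_radius M = Max {cmod l | l. is_eigenvalue M l}"

definition degree :: "('n \<Rightarrow> 'n \<Rightarrow> bool) \<Rightarrow> 'n \<Rightarrow> nat" where
  "degree E u = card {v. E u v}"

definition max_degree :: "('n::finite \<Rightarrow> 'n \<Rightarrow> bool) \<Rightarrow> nat" where
  "max_degree E = Max (range (degree E))"

definition regular :: "('n \<Rightarrow> 'n \<Rightarrow> bool) \<Rightarrow> nat \<Rightarrow> bool" where
  "regular E k \<longleftrightarrow> (\<forall>u. degree E u = k)"

definition connected_graph :: "('n \<Rightarrow> 'n \<Rightarrow> bool) \<Rightarrow> bool" where
  "connected_graph E \<longleftrightarrow> (\<forall>u v. E\<^sup>*\<^sup>* u v)"

end

theory Submission
  imports Defs "Jordan_Normal_Form.Spectral_Radius"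
begin

hide_const (open) Spectral_Radius.spectral_radius


lemma eig_bridge:
  fixes M :: "complex^'n::finite^'n"
  shows "finite {l. is_eigenvalue M l} \<and> {l. is_eigenvalue M l} \<noteq> {}"
proof -
  define n where "n = CARD('n)"
  obtain h where h: "bij_betw h {0..<n} (UNIV::'n set)"
    using ex_bij_betw_nat_finite[of "UNIV::'n set"] unfolding n_def by auto
  define g where "g = inv_into {0..<n} h"
  have g1: "g u < n" "h (g u) = u" for u
    using h unfolding g_def bij_betw_def
    by (auto intro: inv_into_into[of u h "{0..<n}", simplified] f_inv_into_f)
  have g2: "i < n \<Longrightarrow> g (h i) = i" for i
    using h unfolding g_def bij_betw_def by (auto intro: inv_into_f_f)
  have sumre: "(\<Sum>u\<in>UNIV. F u) = (\<Sum>i\<in>{0..<n}. F (h i))" for F :: "'n \<Rightarrow> complex"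
    using sum.reindex_bij_betw[OF h, of F] by simp
  define B where "B = Matrix.mat n n (\<lambda>(i,j). M $ h i $ h j)"
  have B: "B \<in> carrier_mat n n" unfolding B_def by auto
  have n: "n > 0" unfolding n_def by simp
  have eq: "is_eigenvalue M l \<longleftrightarrow> eigenvalue B l" for l
  proof
    assume "is_eigenvalue M l"
    then obtain x where x: "x \<noteq> 0" "M *v x = l *s x" unfolding is_eigenvalue_def by auto
    define v where "v = Matrix.vec n (\<lambda>i. vec_nth x (h i))"
    have "v \<noteq> 0\<^sub>v n"
    proof
      assume "v = 0\<^sub>v n"
      then have "vec_index v (g u) = 0" for u using g1 by simp
      then have "vec_nth x u = 0" for u using g1 unfolding v_def by simp
      then have "x = 0" by (simp add: Finite_Cartesian_Product.vec_eq_iff)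
      then show False using x(1) by simp
    qed
    moreover have "B *\<^sub>v v = l \<cdot>\<^sub>v v"
    proof (rule eq_vecI)
      fix i assume "i < dim_vec (l \<cdot>\<^sub>v v)"
      then have i: "i < n" unfolding v_def by simp
      have "vec_index (B *\<^sub>v v) i = (\<Sum>j\<in>{0..<n}. vec_nth (vec_nth M (h i)) (h j) * vec_nth x (h j))"
        using i unfolding B_def v_def by (simp add: scalar_prod_def)
      also have "\<dots> = vec_nth (M *v x) (h i)"
        by (simp add: matrix_vector_mult_def sumre)
      also have "\<dots> = vec_index (l \<cdot>\<^sub>v v) i" using x(2) i unfolding v_def by simp
      finally show "vec_index (B *\<^sub>v v) i = vec_index (l \<cdot>\<^sub>v v) i" .
    qed (simp add: B_def v_def)
    moreover have "v \<in> carrier_vec n" unfolding v_def by simp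
    ultimately show "eigenvalue B l" unfolding eigenvalue_def eigenvector_def
      by (intro exI[of _ v]) (simp add: B_def)
  next
    assume "eigenvalue B l"
    then obtain v where v: "v \<in> carrier_vec n" "v \<noteq> 0\<^sub>v n" "B *\<^sub>v v = l \<cdot>\<^sub>v v"
      unfolding eigenvalue_def eigenvector_def B_def by auto
    define x :: "complex^'n" where "x = (\<chi> u. vec_index v (g u))"
    have "x \<noteq> 0"
    proof
      assume "x = 0"
      then have "vec_index v i = 0" if "i < n" for i
        using g2[OF that] unfolding x_def Finite_Cartesian_Product.vec_eq_iff by (metis vec_lambda_beta Finite_Cartesian_Product.zero_index)
      then have "v = 0\<^sub>v n" using v(1) by (intro eq_vecI) auto
      then show False using v(2) by simp
    qed
    moreover have "M *v x = l *s x"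
    proof (subst Finite_Cartesian_Product.vec_eq_iff, rule allI)
      fix u
      have "vec_nth (M *v x) u = (\<Sum>j\<in>{0..<n}. vec_nth (vec_nth M u) (h j) * vec_index v j)"
        by (simp add: matrix_vector_mult_def sumre x_def g2)
      also have "\<dots> = vec_index (B *\<^sub>v v) (g u)"
        using g1[of u] v(1) unfolding B_def by (simp add: scalar_prod_def)
      also have "\<dots> = vec_nth (l *s x) u" using v(3) g1[of u] v(1) unfolding x_def by simp
      finally show "vec_nth (M *v x) u = vec_nth (l *s x) u" .
    qed
    ultimately show "is_eigenvalue M l" unfolding is_eigenvalue_def by auto
  qed
  have "{l. is_eigenvalue M l} = spectrum B" unfolding spectrum_def using eq by auto
  then show ?thesis using card_finite_spectrum(1)[OF B] spectrum_non_empty[OF B n] by simp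
qed


no_notation Matrix.vec_index (infixl \<open>$\<close> 100)


lemma omega_eq: "omega = Complex (1/2) (sqrt 3 / 2)"
  unfolding omega_def by (simp add: complex_eq_iff)
lemma cnj_omega_eq: "cnj omega = Complex (1/2) (- sqrt 3 / 2)"
  unfolding omega_eq by (simp add: complex_eq_iff)
lemma omega_mult_cnj: "omega * cnj omega = 1"
  by (simp add: omega_eq complex_eq_iff power_divide)
lemma cnj_mult_omega: "cnj omega * omega = 1"
  using omega_mult_cnj by (simp add: mult.commute)
lemma cmod_omega: "cmod omega = 1"
  by (simp add: omega_eq cmod_def power_divide)
lemma omega_sq: "omega ^ 2 = - cnj omega"
  by (simp add: omega_eq cnj_omega_eq complex_eq_iff power2_eq_square)
lemma omega_cube: "omega ^ 3 = -1"
proof -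
  have "omega ^ 3 = omega * omega ^ 2" by (simp add: power_numeral_reduce)
  also have "\<dots> = -1" using omega_mult_cnj by (simp add: omega_sq)
  finally show ?thesis .
qed
lemma omega_6: "omega ^ 6 = 1"
proof -
  have "omega ^ 6 = (omega ^ 3) ^ 2" by (simp flip: power_mult)
  then show ?thesis using omega_cube by simp
qed
lemma omega_ne: "omega \<noteq> 1" "omega \<noteq> -1" "cnj omega \<noteq> 1" "cnj omega \<noteq> -1" "omega \<noteq> 0"
  by (simp_all add: omega_eq cnj_omega_eq complex_eq_iff)


lemma omega_pow_mod: "omega ^ k = omega ^ (k mod 6)"
proof -
  have k: "k = 6 * (k div 6) + k mod 6" by simp
  have "omega ^ k = omega ^ (6 * (k div 6) + k mod 6)" using k by simp
  also have "\<dots> = (omega ^ 6) ^ (k div 6) * omega ^ (k mod 6)"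
    by (simp only: power_add power_mult)
  finally have "omega ^ k = (omega ^ 6) ^ (k div 6) * omega ^ (k mod 6)" .
  then show ?thesis using omega_6 by simp
qed

lemma T6_pow: "T6 = range (\<lambda>k. omega ^ k)"
proof
  have "omega ^ 4 = - omega"
  proof -
    have "omega ^ 4 = omega ^ 3 * omega" by (simp flip: power_Suc2)
    then show ?thesis using omega_cube by simp
  qed
  moreover have "omega ^ 5 = cnj omega"
  proof -
    have "omega ^ 5 = omega ^ 3 * omega ^ 2" by (simp flip: power_add)
    then show ?thesis using omega_cube omega_sq by simp
  qed
  ultimately have "1 = omega ^ 0" "-1 = omega ^ 3" "omega = omega ^ 1" "cnj omega = omega ^ 5"
    "- omega = omega ^ 4" "- cnj omega = omega ^ 2"
    using omega_cube omega_sq by simp_all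
  then show "T6 \<subseteq> range (\<lambda>k. omega ^ k)" unfolding T6_def by blast
next
  show "range (\<lambda>k. omega ^ k) \<subseteq> T6"
  proof clarify
    fix k :: nat
    have "k mod 6 < 6" by simp
    then have "k mod 6 \<in> {0,1,2,3,4,5}" by auto
    moreover have "omega ^ 4 = - omega"
    proof -
      have "omega ^ 4 = omega ^ 3 * omega" by (simp flip: power_Suc2)
      then show ?thesis using omega_cube by simp
    qed
    moreover have "omega ^ 5 = cnj omega"
    proof -
      have "omega ^ 5 = omega ^ 3 * omega ^ 2" by (simp flip: power_add)
      then show ?thesis using omega_cube omega_sq by simp
    qed
    ultimately have "omega ^ (k mod 6) \<in> T6" unfolding T6_def using omega_cube omega_sq by auto
    then show "omega ^ k \<in> T6" using omega_pow_mod by metis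
  qed
qed

lemma T6_mult: "a \<in> T6 \<Longrightarrow> b \<in> T6 \<Longrightarrow> a * b \<in> T6"
  unfolding T6_pow by (auto simp flip: power_add)

lemma T6_nz: "a \<in> T6 \<Longrightarrow> a \<noteq> 0"
  unfolding T6_pow using omega_ne(5) by auto

lemma omega_in: "1 \<in> T6" "-1 \<in> T6" "omega \<in> T6" "cnj omega \<in> T6" "- omega \<in> T6" "- cnj omega \<in> T6"
  unfolding T6_def by auto



lemma N_entry: "hermN E A $ u $ v = (if A u v then omega else if A v u then cnj omega else if E u v then 1 else 0)"
  by (simp add: hermN_def)

lemma mgD: assumes "mixed_graph E A"
  shows "E u v \<Longrightarrow> E v u" "\<not> E u u" "A u v \<Longrightarrow> E u v" "A u v \<Longrightarrow> \<not> A v u"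
  using assms unfolding mixed_graph_def by blast+

lemma N_zero: "mixed_graph E A \<Longrightarrow> \<not> E u v \<Longrightarrow> hermN E A $ u $ v = 0"
  unfolding N_entry mixed_graph_def by auto

lemma N_cases: "mixed_graph E A \<Longrightarrow> E u v \<Longrightarrow>
   (A u v \<and> hermN E A $ u $ v = omega) \<or> (A v u \<and> \<not> A u v \<and> hermN E A $ u $ v = cnj omega)
   \<or> (undirected_edge E A u v \<and> hermN E A $ u $ v = 1)"
  unfolding undirected_edge_def N_entry mixed_graph_def by auto

lemma N_cmod: "mixed_graph E A \<Longrightarrow> E u v \<Longrightarrow> cmod (hermN E A $ u $ v) = 1"
  using N_cases[of E A u v] cmod_omega by auto

lemma N_cnj: "mixed_graph E A \<Longrightarrow> hermN E A $ v $ u = cnj (hermN E A $ u $ v)"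
  unfolding N_entry mixed_graph_def by auto

lemma N_mult_cnj: "mixed_graph E A \<Longrightarrow> E u v \<Longrightarrow> hermN E A $ u $ v * cnj (hermN E A $ u $ v) = 1"
  using N_cases[of E A u v] omega_mult_cnj by (auto simp: mult.commute)

lemma N_ne_m1: "mixed_graph E A \<Longrightarrow> hermN E A $ u $ v \<noteq> -1"
  unfolding N_entry using omega_ne by auto

lemma N_T6: "mixed_graph E A \<Longrightarrow> E u v \<Longrightarrow> cnj (hermN E A $ u $ v) \<in> T6"
  using N_cases[of E A u v] omega_in by auto

lemma mv: "mixed_graph E A \<Longrightarrow> (hermN E A *v x) $ u = (\<Sum>v\<in>{v. E u v}. hermN E A $ u $ v * x $ v)"
  unfolding matrix_vector_mult_def
  by (simp, rule sum.mono_neutral_right) (auto simp: N_zero)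

lemma deg_le: "Defs.degree E u \<le> max_degree (E :: 'n::finite \<Rightarrow> _)"
  unfolding max_degree_def by simp

lemma bound:
  fixes E A :: "'n::finite \<Rightarrow> 'n \<Rightarrow> bool"
  assumes mg: "mixed_graph E A" and ev: "is_eigenvalue (hermN E A) l"
  shows "cmod l \<le> real (max_degree E)"
proof -
  obtain x where x: "x \<noteq> 0" "hermN E A *v x = l *s x" using ev unfolding is_eigenvalue_def by auto
  define m where "m = Max (range (\<lambda>v. cmod (x $ v)))"
  have mge: "cmod (x $ v) \<le> m" for v unfolding m_def by simp
  have "m \<in> range (\<lambda>v. cmod (x $ v))" unfolding m_def by (rule Max_in) auto
  then obtain u where u: "cmod (x $ u) = m" by auto
  have "m > 0"
  proof (rule ccontr)
    assume "\<not> m > 0"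
    then have "cmod (x $ v) = 0" for v using mge[of v] norm_ge_zero[of "x $ v"] by linarith
    then have "x $ v = 0" for v by simp
    then have "x = 0" by (simp add: Finite_Cartesian_Product.vec_eq_iff)
    then show False using x by simp
  qed
  let ?Nb = "{v. E u v}"
  have "cmod l * m = cmod ((hermN E A *v x) $ u)" using x(2) u by (simp add: norm_mult)
  also have "\<dots> \<le> (\<Sum>v\<in>?Nb. cmod (hermN E A $ u $ v * x $ v))"
    unfolding mv[OF mg] by (rule norm_sum)
  also have "\<dots> \<le> (\<Sum>v\<in>?Nb. m)"
    by (rule sum_mono) (simp add: norm_mult N_cmod[OF mg] mge)
  also have "\<dots> = real (Defs.degree E u) * m" by (simp add: Defs.degree_def)
  also have "\<dots> \<le> real (max_degree E) * m"
    using deg_le[of E u] \<open>m > 0\<close> by (simp add: mult_right_mono)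
  finally show ?thesis using \<open>m > 0\<close> by simp
qed



abbreviation cond_i :: "('n \<Rightarrow> 'n \<Rightarrow> bool) \<Rightarrow> ('n \<Rightarrow> 'n \<Rightarrow> bool) \<Rightarrow> ('n \<Rightarrow> complex) \<Rightarrow> bool" where
  "cond_i E A f \<equiv> ((\<forall>u v. E u v \<and> f u = f v \<longrightarrow> undirected_edge E A u v) \<and>
             (\<forall>u v. E u v \<and> f u \<noteq> f v \<longrightarrow>
                (A u v \<and> f v = cnj omega * f u) \<or> (A v u \<and> f u = cnj omega * f v)))"

abbreviation cond_ii :: "('n \<Rightarrow> 'n \<Rightarrow> bool) \<Rightarrow> ('n \<Rightarrow> 'n \<Rightarrow> bool) \<Rightarrow> ('n \<Rightarrow> complex) \<Rightarrow> bool" where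
  "cond_ii E A f \<equiv> ((\<forall>u v. E u v \<longrightarrow> f u \<noteq> f v) \<and>
             (\<forall>u v. undirected_edge E A u v \<longrightarrow> f v = - f u) \<and>
             (\<forall>u v. A u v \<longrightarrow> f v = - cnj omega * f u))"

lemma cnj_omega_cancel: "cnj omega * (omega * z) = z" "omega * (cnj omega * z) = z"
  by (simp_all add: mult.assoc[symmetric] omega_mult_cnj cnj_mult_omega)

lemma edge_i:
  assumes mg: "mixed_graph E A" and c: "cond_i E A f" and e: "E u v"
  shows "hermN E A $ u $ v * f v = f u"
proof -
  have c1: "f u = f v \<Longrightarrow> undirected_edge E A u v" using c e by blast
  have c2: "f u \<noteq> f v \<Longrightarrow> (A u v \<and> f v = cnj omega * f u) \<or> (A v u \<and> f u = cnj omega * f v)"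
    using c e by blast
  show ?thesis using N_cases[OF mg e] c1 c2 mgD(4)[OF mg, of u v]
    by (cases "f u = f v") (auto simp: undirected_edge_def cnj_omega_cancel)
qed

lemma edge_ii:
  assumes mg: "mixed_graph E A" and c: "cond_ii E A f" and e: "E u v"
  shows "hermN E A $ u $ v * f v = - f u"
proof -
  have c1: "undirected_edge E A u v \<Longrightarrow> f v = - f u" using c by blast
  have c2: "A u v \<Longrightarrow> f v = - cnj omega * f u" using c by blast
  have c3: "A v u \<Longrightarrow> f u = - cnj omega * f v" using c by blast
  show ?thesis using N_cases[OF mg e] c1 c2 c3
    by (auto simp: cnj_omega_cancel)
qed

lemma eig_from_edges:
  fixes E A :: "'n::finite \<Rightarrow> 'n \<Rightarrow> bool"
  assumes mg: "mixed_graph E A" and reg: "regular E k"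
    and ed: "\<And>u v. E u v \<Longrightarrow> hermN E A $ u $ v * f v = c * f u"
  shows "hermN E A *v (\<chi> u. f u) = (of_nat k * c) *s (\<chi> u. f u)"
proof (subst Finite_Cartesian_Product.vec_eq_iff, rule allI)
  fix u
  have "(hermN E A *v (\<chi> u. f u)) $ u = (\<Sum>v\<in>{v. E u v}. c * f u)"
    unfolding mv[OF mg] by (rule sum.cong) (auto simp: ed)
  also have "\<dots> = of_nat (card {v. E u v}) * c * f u" by simp
  also have "card {v. E u v} = k" using reg unfolding regular_def Defs.degree_def by simp
  finally show "(hermN E A *v (\<chi> u. f u)) $ u = ((of_nat k * c) *s (\<chi> u. f u)) $ u" by simp
qed

lemma conv:
  fixes E A :: "'n::finite \<Rightarrow> 'n \<Rightarrow> bool"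
  assumes mg: "mixed_graph E A" and reg: "regular E k" and fT: "\<forall>v. f v \<in> T6"
    and c: "cond_i E A f \<or> cond_ii E A f"
  shows "is_eigenvalue (hermN E A) (of_nat k) \<or> is_eigenvalue (hermN E A) (- of_nat k)"
proof -
  have nz: "(\<chi> u. f u) \<noteq> 0"
  proof
    assume "(\<chi> u. f u) = 0"
    then have "f u = 0" for u by (metis Finite_Cartesian_Product.zero_index vec_lambda_beta)
    then show False using fT T6_nz by blast
  qed
  from c show ?thesis
  proof
    assume "cond_i E A f"
    then have "hermN E A *v (\<chi> u. f u) = (of_nat k * 1) *s (\<chi> u. f u)"
      using eig_from_edges[OF mg reg, of f 1] edge_i[OF mg] by auto
    then show ?thesis using nz unfolding is_eigenvalue_def by auto
  next
    assume "cond_ii E A f"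
    then have "hermN E A *v (\<chi> u. f u) = (of_nat k * -1) *s (\<chi> u. f u)"
      using eig_from_edges[OF mg reg, of f "-1"] edge_ii[OF mg] by auto
    then show ?thesis using nz unfolding is_eigenvalue_def by auto
  qed
qed

lemma cond_i_from:
  assumes mg: "mixed_graph E A" and nz: "\<forall>v. f v \<noteq> 0"
    and ed: "\<And>u v. E u v \<Longrightarrow> hermN E A $ u $ v * f v = f u"
  shows "cond_i E A f"
proof (intro conjI allI impI; elim conjE)
  fix u v assume e: "E u v" and eq: "f u = f v"
  have "hermN E A $ u $ v = 1" using ed[OF e] eq nz by (metis mult_cancel_right2)
  then show "undirected_edge E A u v"
    using N_cases[OF mg e] omega_ne by auto
next
  fix u v assume e: "E u v" and ne: "f u \<noteq> f v"
  have *: "hermN E A $ u $ v * f v = f u" by (rule ed[OF e])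
  from N_cases[OF mg e] show "(A u v \<and> f v = cnj omega * f u) \<or> (A v u \<and> f u = cnj omega * f v)"
  proof (elim disjE conjE)
    assume "A u v" "hermN E A $ u $ v = omega"
    then show ?thesis using * by (metis cnj_omega_cancel(1))
  next
    assume "A v u" "hermN E A $ u $ v = cnj omega"
    then show ?thesis using * by simp
  next
    assume "hermN E A $ u $ v = 1"
    then show ?thesis using * ne by simp
  qed
qed

lemma cond_ii_from:
  assumes mg: "mixed_graph E A" and nz: "\<forall>v. f v \<noteq> 0"
    and ed: "\<And>u v. E u v \<Longrightarrow> hermN E A $ u $ v * f v = - f u"
  shows "cond_ii E A f"
proof (intro conjI allI impI)
  fix u v assume e: "E u v"
  show "f u \<noteq> f v"
  proof
    assume "f u = f v"
    then have "hermN E A $ u $ v * f u = -1 * f u" using ed[OF e] by simp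
    then have "hermN E A $ u $ v = -1" using nz by (metis mult_cancel_right)
    then show False using N_ne_m1[OF mg] by blast
  qed
next
  fix u v assume "undirected_edge E A u v"
  then show "f v = - f u" using ed[of u v] unfolding undirected_edge_def N_entry by auto
next
  fix u v assume a: "A u v"
  then have e: "E u v" using mgD(3)[OF mg] by blast
  have "omega * f v = - f u" using ed[OF e] a by (simp add: N_entry)
  then show "f v = - cnj omega * f u" by (metis cnj_omega_cancel(1) mult_minus_right mult.left_commute mult_minus_left)
qed



lemma re_cmod: "cmod z \<le> Re z \<Longrightarrow> z = complex_of_real (Re z)"
proof -
  assume a: "cmod z \<le> Re z"
  have "\<bar>Re z\<bar> \<le> cmod z" by (rule abs_Re_le_cmod)
  then have "cmod z = Re z" using a by linarith
  then have "(Re z)^2 = (Re z)^2 + (Im z)^2" using cmod_power2[of z] by simp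
  then have "Im z = 0" by simp
  then show ?thesis by (simp add: complex_eq_iff)
qed

lemma key_step:
  fixes t :: "'v \<Rightarrow> complex" and S :: "'v set"
  assumes fin: "finite S" and sum: "(\<Sum>v\<in>S. t v) = \<alpha>" and ca: "cmod \<alpha> = D * m"
    and tle: "\<And>v. v \<in> S \<Longrightarrow> cmod (t v) \<le> m" and cardle: "real (card S) \<le> D"
    and Dpos: "D > 0" and mpos: "m > 0"
  shows "real (card S) = D \<and> (\<forall>v\<in>S. t v = \<alpha> / of_real D)"
proof -
  have reb: "Re (cnj \<alpha> * t v) \<le> D * m * m" if "v \<in> S" for v
  proof -
    have "Re (cnj \<alpha> * t v) \<le> cmod (cnj \<alpha> * t v)" by (rule complex_Re_le_cmod)
    also have "\<dots> = D * m * cmod (t v)" by (simp add: norm_mult ca)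
    also have "\<dots> \<le> D * m * m" using tle[OF that] Dpos mpos by simp
    finally show ?thesis .
  qed
  have "(\<Sum>v\<in>S. Re (cnj \<alpha> * t v)) = Re (\<Sum>v\<in>S. cnj \<alpha> * t v)"
    by (simp only: Re_sum)
  also have "\<dots> = Re (cnj \<alpha> * (\<Sum>v\<in>S. t v))" by (simp only: sum_distrib_left)
  also have "\<dots> = Re (cnj \<alpha> * \<alpha>)" by (simp only: sum)
  also have "\<dots> = (D * m)^2"
  proof -
    have "cnj \<alpha> * \<alpha> = of_real ((cmod \<alpha>)^2)" by (simp only: complex_norm_square mult.commute)
    then show ?thesis using ca by simp
  qed
  finally have sre: "(\<Sum>v\<in>S. Re (cnj \<alpha> * t v)) = (D * m)^2" .
  have "(\<Sum>v\<in>S. D * m * m - Re (cnj \<alpha> * t v)) = real (card S) * (D * m * m) - (D*m)^2"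
    by (simp only: sum_subtractf sum_constant sre)
  also have "\<dots> \<le> 0"
  proof -
    have "real (card S) * (D * m * m) \<le> D * (D * m * m)"
      using cardle Dpos mpos by (intro mult_right_mono) auto
    then show ?thesis by (simp add: power2_eq_square mult_ac)
  qed
  finally have sle: "(\<Sum>v\<in>S. D * m * m - Re (cnj \<alpha> * t v)) \<le> 0" .
  have nn: "\<forall>v\<in>S. 0 \<le> D * m * m - Re (cnj \<alpha> * t v)" using reb by auto
  have s0: "(\<Sum>v\<in>S. D * m * m - Re (cnj \<alpha> * t v)) = 0"
  proof -
    have "0 \<le> (\<Sum>v\<in>S. D * m * m - Re (cnj \<alpha> * t v))" using nn by (simp add: sum_nonneg)
    then show ?thesis using sle by linarith
  qed
  then have each: "\<forall>v\<in>S. D * m * m - Re (cnj \<alpha> * t v) = 0"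
    using sum_nonneg_eq_0_iff[OF fin nn[rule_format]] by simp
  have "real (card S) * (D * m * m) = D * (D * m * m)"
  proof -
    have "real (card S) * (D * m * m) - (D*m)^2 = 0"
      using s0 by (simp only: sum_subtractf sum_constant sre)
    then show ?thesis by (simp add: power2_eq_square mult_ac)
  qed
  then have c: "real (card S) = D" using Dpos mpos by simp
  have "t v = \<alpha> / of_real D" if v: "v \<in> S" for v
  proof -
    let ?z = "cnj \<alpha> * t v"
    have r: "Re ?z = D * m * m" using each v by simp
    have "cmod ?z = D * m * cmod (t v)" by (simp add: norm_mult ca)
    also have "\<dots> \<le> D * m * m" using tle[OF v] Dpos mpos by simp
    finally have "cmod ?z \<le> Re ?z" using r by simp
    then have z: "?z = of_real (D * m * m)" using re_cmod r by metis
    have "\<alpha> * cnj \<alpha> = of_real ((D * m)^2)"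
      using complex_norm_square[of \<alpha>] ca by (simp only:)
    then have "of_real ((D*m)^2) * t v = \<alpha> * of_real (D * m * m)"
      using z by (metis mult.assoc)
    then have "of_real D * (of_real (D*m*m) * t v) = of_real D * (\<alpha> / of_real D * of_real (D * m * m))"
      using Dpos by (simp add: power2_eq_square mult_ac)
    then have "of_real D * t v = \<alpha>" using Dpos mpos by simp
    then show ?thesis using Dpos by (simp add: field_simps)
  qed
  then show ?thesis using c by blast
qed



lemma eq_case:
  fixes E A :: "'n::finite \<Rightarrow> 'n \<Rightarrow> bool"
  assumes mg: "mixed_graph E A" and conn: "connected_graph E"
    and ev: "is_eigenvalue (hermN E A) l" and cl: "cmod l = real (max_degree E)"
    and Dpos: "max_degree E > 0"
  shows "regular E (max_degree E) \<and> (\<exists>f. (\<forall>v. f v \<in> T6) \<and> (cond_i E A f \<or> cond_ii E A f))"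
proof -
  define D where "D = real (max_degree E)"
  have D: "D > 0" using Dpos unfolding D_def by simp
  let ?N = "hermN E A"
  obtain x where x: "x \<noteq> 0" "?N *v x = l *s x" using ev unfolding is_eigenvalue_def by auto
  define m where "m = Max (range (\<lambda>v. cmod (x $ v)))"
  have mge: "cmod (x $ v) \<le> m" for v unfolding m_def by simp
  have "m \<in> range (\<lambda>v. cmod (x $ v))" unfolding m_def by (rule Max_in) auto
  then obtain u0 where u0: "cmod (x $ u0) = m" by auto
  have mpos: "m > 0"
  proof (rule ccontr)
    assume "\<not> m > 0"
    then have "cmod (x $ v) = 0" for v using mge[of v] norm_ge_zero[of "x $ v"] by linarith
    then have "x $ v = 0" for v by simp
    then have "x = 0" by (simp add: Finite_Cartesian_Product.vec_eq_iff)
    then show False using x by simp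
  qed
  define \<mu> where "\<mu> = l / of_real D"
  have cmu: "cmod \<mu> = 1" unfolding \<mu>_def using cl D by (simp add: D_def norm_divide)
  have key: "Defs.degree E u = max_degree E \<and> (\<forall>v. E u v \<longrightarrow> ?N $ u $ v * x $ v = \<mu> * x $ u)"
    if u: "cmod (x $ u) = m" for u
  proof -
    have "real (card {v. E u v}) = D \<and> (\<forall>v\<in>{v. E u v}. ?N $ u $ v * x $ v = (l * x $ u) / of_real D)"
    proof (rule key_step)
      show "(\<Sum>v\<in>{v. E u v}. ?N $ u $ v * x $ v) = l * x $ u"
        using x(2) mv[OF mg, of x u] by simp
      show "cmod (l * x $ u) = D * m" using cl u by (simp add: norm_mult D_def)
      show "cmod (?N $ u $ v * x $ v) \<le> m" if "v \<in> {v. E u v}" for v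
        using that mge[of v] by (simp add: norm_mult N_cmod[OF mg])
      show "real (card {v. E u v}) \<le> D" using deg_le[of E u] unfolding D_def Defs.degree_def by simp
    qed (use D mpos in auto)
    then show ?thesis unfolding D_def Defs.degree_def \<mu>_def by auto
  qed
  have allK: "cmod (x $ w) = m" for w
  proof -
    have "E\<^sup>*\<^sup>* u0 w" using conn unfolding connected_graph_def by blast
    then show ?thesis
    proof (induction rule: rtranclp_induct)
      case base then show ?case using u0 .
    next
      case (step v w)
      have "?N $ v $ w * x $ w = \<mu> * x $ v" using key[OF step.IH] step.hyps(2) by blast
      then have "cmod (?N $ v $ w * x $ w) = cmod (\<mu> * x $ v)" by simp
      then show ?case using step.IH cmu N_cmod[OF mg step.hyps(2)] by (simp add: norm_mult)
    qed
  qed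
  have reg: "regular E (max_degree E)" unfolding regular_def using key allK by blast
  have edge: "E u v \<Longrightarrow> ?N $ u $ v * x $ v = \<mu> * x $ u" for u v using key allK by blast
  have xnz: "x $ w \<noteq> 0" for w using allK[of w] mpos by auto
  have mu: "\<mu> = 1 \<or> \<mu> = -1"
  proof -
    have "card {v. E u0 v} > 0" using reg Dpos unfolding regular_def Defs.degree_def by simp
    then obtain v where e: "E u0 v" by (auto simp: card_gt_0_iff)
    define c where "c = ?N $ u0 $ v"
    have cc: "c * cnj c = 1" "cnj c * c = 1" unfolding c_def using N_mult_cnj[OF mg e] by (simp_all add: mult.commute)
    have e1: "c * x $ v = \<mu> * x $ u0" using edge[OF e] unfolding c_def .
    have e2: "cnj c * x $ u0 = \<mu> * x $ v" using edge[OF mgD(1)[OF mg e]] N_cnj[OF mg, of v u0] unfolding c_def by simp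
    have xv: "x $ v = cnj c * \<mu> * x $ u0"
    proof -
      have "cnj c * (c * x $ v) = cnj c * (\<mu> * x $ u0)" using e1 by simp
      then show ?thesis using cc by (simp add: mult.assoc[symmetric])
    qed
    have "cnj c * x $ u0 * 1 = cnj c * x $ u0 * (\<mu> * \<mu>)" using e2 xv by (simp add: mult_ac)
    moreover have nz: "cnj c * x $ u0 \<noteq> 0" using cc xnz by auto
    ultimately have "\<mu> * \<mu> = 1" using mult_left_cancel[OF nz] by simp
    then show ?thesis using power2_eq_1_iff[of \<mu>] by (simp add: power2_eq_square)
  qed
  define f where "f w = x $ w / x $ u0" for w
  have fnz: "\<forall>w. f w \<noteq> 0" unfolding f_def using xnz by simp
  have fedge: "E u v \<Longrightarrow> ?N $ u $ v * f v = \<mu> * f u" for u v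
  proof -
    assume "E u v"
    then have "?N $ u $ v * x $ v / x $ u0 = \<mu> * x $ u / x $ u0" using edge[of u v] by simp
    then show ?thesis unfolding f_def by (simp only: times_divide_eq_right)
  qed
  have muT: "\<mu> \<in> T6" using mu omega_in by auto
  have fT: "\<forall>w. f w \<in> T6"
  proof
    fix w
    have "E\<^sup>*\<^sup>* u0 w" using conn unfolding connected_graph_def by blast
    then show "f w \<in> T6"
    proof (induction rule: rtranclp_induct)
      case base then show ?case using xnz omega_in unfolding f_def by simp
    next
      case (step v w)
      have "cnj (?N $ v $ w) * (?N $ v $ w * f w) = cnj (?N $ v $ w) * (\<mu> * f v)"
        using fedge[OF step.hyps(2)] by simp
      moreover have "cnj (?N $ v $ w) * ?N $ v $ w = 1"
        using N_mult_cnj[OF mg step.hyps(2)] by (simp only: mult.commute)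
      ultimately have "f w = cnj (?N $ v $ w) * \<mu> * f v"
        by (simp only: mult.assoc[symmetric] mult_1)
      moreover have "cnj (?N $ v $ w) * \<mu> * f v \<in> T6"
        using T6_mult[OF T6_mult[OF N_T6[OF mg step.hyps(2)] muT] step.IH] .
      ultimately show ?case by simp
    qed
  qed
  from mu have "cond_i E A f \<or> cond_ii E A f"
  proof
    assume "\<mu> = 1" then show ?thesis using cond_i_from[OF mg fnz] fedge by simp
  next
    assume "\<mu> = -1" then show ?thesis using cond_ii_from[OF mg fnz] fedge by simp
  qed
  then show ?thesis using reg fT by blast
qed


theorem theorem3p1:
  fixes E A :: "'n::finite \<Rightarrow> 'n \<Rightarrow> bool"
  assumes "mixed_graph E A"
  shows "spectral_radius (hermN E A) \<le> real (max_degree E) \<and>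
    (connected_graph E \<longrightarrow>
      (spectral_radius (hermN E A) = real (max_degree E) \<longleftrightarrow>
        regular E (max_degree E) \<and>
        (\<exists>f :: 'n \<Rightarrow> complex. (\<forall>v. f v \<in> T6) \<and>
          ( ((\<forall>u v. E u v \<and> f u = f v \<longrightarrow> undirected_edge E A u v) \<and>
             (\<forall>u v. E u v \<and> f u \<noteq> f v \<longrightarrow>
                (A u v \<and> f v = cnj omega * f u) \<or> (A v u \<and> f u = cnj omega * f v)))
          \<or> ((\<forall>u v. E u v \<longrightarrow> f u \<noteq> f v) \<and>
             (\<forall>u v. undirected_edge E A u v \<longrightarrow> f v = - f u) \<and>
             (\<forall>u v. A u v \<longrightarrow> f v = - cnj omega * f u))))))"
proof -
  note mg = assms
  define S where "S = {cmod l | l. is_eigenvalue (hermN E A) l}"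
  have S_img: "S = cmod ` {l. is_eigenvalue (hermN E A) l}" unfolding S_def by auto
  have fin: "finite S" and ne: "S \<noteq> {}" using eig_bridge[of "hermN E A"] unfolding S_img by auto
  have ub: "s \<le> real (max_degree E)" if "s \<in> S" for s
    using that bound[OF mg] unfolding S_def by auto
  have rho: "spectral_radius (hermN E A) = Max S" unfolding Defs.spectral_radius_def S_def by simp
  have part1: "spectral_radius (hermN E A) \<le> real (max_degree E)"
    unfolding rho using fin ne ub by simp
  have part2: "spectral_radius (hermN E A) = real (max_degree E) \<longleftrightarrow>
        regular E (max_degree E) \<and> (\<exists>f :: 'n \<Rightarrow> complex. (\<forall>v. f v \<in> T6) \<and> (cond_i E A f \<or> cond_ii E A f))"
    if conn: "connected_graph E"
  proof
    assume eq: "spectral_radius (hermN E A) = real (max_degree E)"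
    have "Max S \<in> S" using fin ne by (rule Max_in)
    then obtain l where l: "is_eigenvalue (hermN E A) l" "cmod l = real (max_degree E)"
      using eq unfolding rho S_def by auto
    show "regular E (max_degree E) \<and> (\<exists>f :: 'n \<Rightarrow> complex. (\<forall>v. f v \<in> T6) \<and> (cond_i E A f \<or> cond_ii E A f))"
    proof (cases "max_degree E > 0")
      case True
      then show ?thesis using eq_case[OF mg conn l] by blast
    next
      case False
      then have d0: "Defs.degree E u = 0" for u using deg_le[of E u] by simp
      then have noE: "\<not> E u v" for u v unfolding Defs.degree_def by simp
      have r0: "regular E (max_degree E)" unfolding regular_def using d0 False by simp
      show ?thesis using r0 noE omega_in
        by (intro conjI exI[where x="\<lambda>_. 1::complex"]) auto
    qed
  next
    assume "regular E (max_degree E) \<and> (\<exists>f :: 'n \<Rightarrow> complex. (\<forall>v. f v \<in> T6) \<and> (cond_i E A f \<or> cond_ii E A f))"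
    then obtain f where reg: "regular E (max_degree E)" and fT: "\<forall>v. f v \<in> T6"
      and c: "cond_i E A f \<or> cond_ii E A f" by blast
    have "is_eigenvalue (hermN E A) (of_nat (max_degree E)) \<or> is_eigenvalue (hermN E A) (- of_nat (max_degree E))"
      by (rule conv[OF mg reg fT c])
    then have "\<exists>l. is_eigenvalue (hermN E A) l \<and> cmod l = real (max_degree E)"
      by (metis norm_of_nat norm_minus_cancel)
    then have "real (max_degree E) \<in> S" unfolding S_def mem_Collect_eq by metis
    then have "real (max_degree E) \<le> Max S" using fin by simp
    then show "spectral_radius (hermN E A) = real (max_degree E)" using part1 unfolding rho by simp
  qed
  show ?thesis using part1 part2 by blast
qed

end
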